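(* Fix $\vartheta_1\in(0,\pi/2)$ and an integer $k\ge0$. Then $$\min_{\eta\in I_k}\Phi(\eta+\pi)\ \ge\ \min_{\eta\in I_k}\Phi(\eta)+\pi(1-\cos\vartheta_1).$$
   Context: For integers $k\ge0$ let $I_k=[\vartheta_1+k\pi,(k+1)\pi-\vartheta_1]$ (note $\eta\in I_k$ iff $\eta+\pi\in I_{k+1}$). For $\eta\in I_k$ set $\gamma(\eta)=\sqrt{1-\sin^2\vartheta_1/\sin^2\eta}$ and $$\Phi(\eta)=-\eta\,\gamma(\eta)+k\pi+\arccos\Big(\frac{\cos(\eta-k\pi)}{\cos\vartheta_1}\Big),\qquad\arccos\in[0,\pi].$$ *)

theory Defs
  imports "HOL-Analysis.Analysis"
begin

definition Ik :: "real \<Rightarrow> nat \<Rightarrow> real set" where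
  "Ik th1 k = {th1 + real k * pi .. (real k + 1) * pi - th1}"

definition gam :: "real \<Rightarrow> real \<Rightarrow> real" where
  "gam th1 eta = sqrt (1 - (sin th1)\<^sup>2 / (sin eta)\<^sup>2)"

text \<open>Phi on I_k; the index k is the one with eta in I_k (the I_k are disjoint).\<close>
definition Phi :: "real \<Rightarrow> nat \<Rightarrow> real \<Rightarrow> real" where
  "Phi th1 k eta = - eta * gam th1 eta + real k * pi
                   + arccos (cos (eta - real k * pi) / cos th1)"

end

theory Submission
  imports Defs
begin

lemma sin_ne0:
  fixes eta :: real and k :: nat
  assumes "real k * pi < eta" "eta < (real k + 1) * pi"
  shows "sin eta \<noteq> 0"
proof
  assume "sin eta = 0"
  then obtain n :: int where n: "eta = of_int n * pi" using sin_zero_iff_int2 by blast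
  have "real k < of_int n" using assms(1) n by (simp add: mult_less_cancel_right)
  moreover have "of_int n < real k + 1" using assms(2) n by (simp add: mult_less_cancel_right)
  ultimately have "int k < n" "n < int k + 1"
    by (metis of_int_of_nat_eq of_int_less_iff, metis of_int_of_nat_eq of_int_1 of_int_add of_int_less_iff)
  thus False by linarith
qed

theorem lemma5p24:
  fixes th1 :: real and k :: nat
  assumes "0 < th1" and "th1 < pi / 2"
  shows "Inf ((\<lambda>eta. Phi th1 (k + 1) (eta + pi)) ` Ik th1 k)
           \<ge> Inf (Phi th1 k ` Ik th1 k) + pi * (1 - cos th1)"
proof -
  have ne: "Ik th1 k \<noteq> {}" using assms unfolding Ik_def by (auto simp: algebra_simps)
  have cpos: "cos th1 > 0" using assms by (intro cos_gt_zero) auto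
  have gam_le: "gam th1 eta \<le> cos th1" if "eta \<in> Ik th1 k" for eta
  proof -
    have "real k * pi < eta" "eta < (real k + 1) * pi" using that assms unfolding Ik_def by auto
    hence s0: "sin eta \<noteq> 0" by (rule sin_ne0)
    have s2: "(sin eta)\<^sup>2 \<le> 1" by (simp add: abs_square_le_1)
    have "(sin th1)\<^sup>2 \<le> (sin th1)\<^sup>2 / (sin eta)\<^sup>2"
      using s0 s2 by (simp add: le_divide_eq mult_left_le)
    hence "1 - (sin th1)\<^sup>2 / (sin eta)\<^sup>2 \<le> (cos th1)\<^sup>2"
      by (simp add: cos_squared_eq)
    hence "sqrt (1 - (sin th1)\<^sup>2 / (sin eta)\<^sup>2) \<le> sqrt ((cos th1)\<^sup>2)" by (rule real_sqrt_le_mono)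
    thus ?thesis using cpos unfolding gam_def by simp
  qed
  have gam01: "gam th1 eta \<le> 1" if "eta \<in> Ik th1 k" for eta
    using gam_le[OF that] cos_le_one[of th1] by linarith
  have shift: "Phi th1 (k + 1) (eta + pi) = Phi th1 k eta + pi * (1 - gam th1 eta)" for eta
  proof -
    have g: "gam th1 (eta + pi) = gam th1 eta" unfolding gam_def by simp
    have c: "eta + pi - real (k + 1) * pi = eta - real k * pi" by (simp add: algebra_simps)
    show ?thesis unfolding Phi_def g c by (simp add: algebra_simps)
  qed
  have bdd: "bdd_below (Phi th1 k ` Ik th1 k)"
  proof (rule bdd_belowI2)
    fix eta assume e: "eta \<in> Ik th1 k"
    have e0: "0 \<le> eta" "eta \<le> (real k + 1) * pi" using e assms pi_gt_zero unfolding Ik_def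
      by (auto intro: add_nonneg_nonneg order_trans[rotated])
    have eg: "eta * gam th1 eta \<le> eta * 1" using gam01[OF e] e0 by (intro mult_left_mono) auto
    define u where "u = eta - real k * pi"
    have u: "th1 \<le> u" "u \<le> pi - th1" using e unfolding Ik_def u_def by (auto simp: algebra_simps)
    have c1: "cos u \<le> cos th1" using u assms by (intro cos_monotone_0_pi_le) auto
    have "cos (pi - th1) \<le> cos u" using u assms by (intro cos_monotone_0_pi_le) auto
    hence c2: "- cos th1 \<le> cos u" by simp
    have ac: "0 \<le> arccos (cos (eta - real k * pi) / cos th1)" unfolding u_def[symmetric]
      by (rule arccos_lbound) (use cpos c1 c2 in \<open>auto simp: divide_simps\<close>)
    show "- (real k + 1) * pi + real k * pi \<le> Phi th1 k eta"
      unfolding Phi_def using e0 eg ac by (auto simp: algebra_simps)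
  qed
  show ?thesis
  proof (rule cInf_greatest)
    show "(\<lambda>eta. Phi th1 (k + 1) (eta + pi)) ` Ik th1 k \<noteq> {}" using ne by simp
  next
    fix x assume "x \<in> (\<lambda>eta. Phi th1 (k + 1) (eta + pi)) ` Ik th1 k"
    then obtain eta where e: "eta \<in> Ik th1 k" and x: "x = Phi th1 (k + 1) (eta + pi)" by auto
    have "Inf (Phi th1 k ` Ik th1 k) \<le> Phi th1 k eta" using bdd e by (intro cInf_lower) auto
    moreover have "pi * (1 - cos th1) \<le> pi * (1 - gam th1 eta)" using gam_le[OF e] by simp
    ultimately show "Inf (Phi th1 k ` Ik th1 k) + pi * (1 - cos th1) \<le> x" unfolding x shift by linarith
  qed
qed

end
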